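(* Let $G=(V,E)$ be a finite graph with graphic matroid $M(G)$, and consider the matroid game on $M(G)$ with loss matrix for the row player equal to the identity matrix $I\in\mathbb{R}^{E\times E}$. Then there exists a symmetric Nash equilibrium if and only if every block of $G$ is uniformly dense.
   Context: The base polytope of a matroid with rank function $r$ on $E$ is $B(M)=\{x\ge0: x(S)\le r(S)\ \forall S\subseteq E,\ x(E)=r(E)\}$; for the graphic matroid this is the spanning tree polytope (convex hull of spanning forests that are maximal, i.e. bases). In the game, the row player chooses $x\in B(M)$ minimizing $x^TLy$, the column player chooses $y\in B(M)$ maximizing it; $(x,x)$ with $x\in B(M)$ is a symmetric Nash equilibrium if $x^TLz\le x^TLx\le z^TLx$ for all $z\in B(M)$. A block of $G$ is a maximal connected subgraph without a cut vertex. A graph $H$ is uniformly dense if $|F|/r(F)\le|E(H)|/r(E(H))$ for every $F\subseteq E(H)$ with $r(F)>0$, where $r$ is the graphic matroid rank ($r(F)$ = number of vertices incident to $F$ minus number of connected components of the subgraph formed by $F$). *)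

theory Defs
  imports Complex_Main
begin

text \<open>A finite loopless multigraph: vertex set V, edge set E, and an incidence
  map ends assigning to each edge its set of two distinct endpoints.\<close>

definition finite_graph :: "'v set \<Rightarrow> 'e set \<Rightarrow> ('e \<Rightarrow> 'v set) \<Rightarrow> bool" where
  "finite_graph V E ends \<longleftrightarrow> finite V \<and> finite E \<and>
     (\<forall>e\<in>E. ends e \<subseteq> V \<and> card (ends e) = 2)"

definition adj :: "('e \<Rightarrow> 'v set) \<Rightarrow> 'e set \<Rightarrow> ('v \<times> 'v) set" where
  "adj ends F = {(a, b). \<exists>e\<in>F. ends e = {a, b}}"

definition verts :: "('e \<Rightarrow> 'v set) \<Rightarrow> 'e set \<Rightarrow> 'v set" where
  "verts ends F = \<Union> (ends ` F)"

definition grank :: "('e \<Rightarrow> 'v set) \<Rightarrow> 'e set \<Rightarrow> nat" where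
  "grank ends F = card (verts ends F) - card (verts ends F // (adj ends F)\<^sup>+)"

definition base_polytope :: "'e set \<Rightarrow> ('e \<Rightarrow> 'v set) \<Rightarrow> ('e \<Rightarrow> real) set" where
  "base_polytope E ends = {x. (\<forall>e. e \<notin> E \<longrightarrow> x e = 0) \<and> (\<forall>e\<in>E. x e \<ge> 0)
      \<and> (\<forall>S\<subseteq>E. sum x S \<le> real (grank ends S))
      \<and> sum x E = real (grank ends E)}"

definition bilin :: "'e set \<Rightarrow> ('e \<Rightarrow> 'e \<Rightarrow> real) \<Rightarrow> ('e \<Rightarrow> real) \<Rightarrow> ('e \<Rightarrow> real) \<Rightarrow> real" where
  "bilin E L x y = (\<Sum>e\<in>E. \<Sum>f\<in>E. x e * L e f * y f)"

definition identity_matrix :: "'e \<Rightarrow> 'e \<Rightarrow> real" where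
  "identity_matrix e f = (if e = f then 1 else 0)"

definition symmetric_NE ::
  "'e set \<Rightarrow> ('e \<Rightarrow> 'v set) \<Rightarrow> ('e \<Rightarrow> 'e \<Rightarrow> real) \<Rightarrow> ('e \<Rightarrow> real) \<Rightarrow> bool" where
  "symmetric_NE E ends L x \<longleftrightarrow> x \<in> base_polytope E ends \<and>
     (\<forall>z\<in>base_polytope E ends. bilin E L x z \<le> bilin E L x x \<and> bilin E L x x \<le> bilin E L z x)"

definition is_subgraph :: "'v set \<Rightarrow> 'e set \<Rightarrow> ('e \<Rightarrow> 'v set) \<Rightarrow> 'v set \<Rightarrow> 'e set \<Rightarrow> bool" where
  "is_subgraph V E ends VH EH \<longleftrightarrow> VH \<subseteq> V \<and> EH \<subseteq> E \<and> (\<forall>e\<in>EH. ends e \<subseteq> VH)"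

definition connected_graph :: "('e \<Rightarrow> 'v set) \<Rightarrow> 'v set \<Rightarrow> 'e set \<Rightarrow> bool" where
  "connected_graph ends VH EH \<longleftrightarrow> VH \<noteq> {} \<and>
     (\<forall>a\<in>VH. \<forall>b\<in>VH. (a, b) \<in> (adj ends EH)\<^sup>*)"

definition has_cut_vertex :: "('e \<Rightarrow> 'v set) \<Rightarrow> 'v set \<Rightarrow> 'e set \<Rightarrow> bool" where
  "has_cut_vertex ends VH EH \<longleftrightarrow> (\<exists>v\<in>VH. \<exists>a\<in>VH - {v}. \<exists>b\<in>VH - {v}.
      (a, b) \<notin> (adj ends {e\<in>EH. v \<notin> ends e})\<^sup>*)"

definition is_block :: "'v set \<Rightarrow> 'e set \<Rightarrow> ('e \<Rightarrow> 'v set) \<Rightarrow> 'v set \<Rightarrow> 'e set \<Rightarrow> bool" where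
  "is_block V E ends VH EH \<longleftrightarrow>
     is_subgraph V E ends VH EH \<and> connected_graph ends VH EH \<and> \<not> has_cut_vertex ends VH EH \<and>
     (\<forall>VH' EH'. is_subgraph V E ends VH' EH' \<and> connected_graph ends VH' EH' \<and>
        \<not> has_cut_vertex ends VH' EH' \<and> VH \<subseteq> VH' \<and> EH \<subseteq> EH' \<longrightarrow> VH' = VH \<and> EH' = EH)"

definition uniformly_dense :: "('e \<Rightarrow> 'v set) \<Rightarrow> 'e set \<Rightarrow> bool" where
  "uniformly_dense ends EH \<longleftrightarrow> (\<forall>F\<subseteq>EH. grank ends F > 0 \<longrightarrow>
      real (card F) / real (grank ends F) \<le> real (card EH) / real (grank ends EH))"

end

theory Submission
  imports Defs
begin


lemma adj_sym: "(a,b) \<in> adj ends F \<Longrightarrow> (b,a) \<in> adj ends F"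
  by (auto simp: adj_def insert_commute)

lemma sym_adj: "sym (adj ends F)"
  by (meson adj_sym symI)

lemma rtr_sym: "(a,b) \<in> (adj ends F)\<^sup>* \<Longrightarrow> (b,a) \<in> (adj ends F)\<^sup>*"
  by (meson sym_adj sym_rtrancl symD)

lemma adj_mono: "F \<subseteq> G \<Longrightarrow> adj ends F \<subseteq> adj ends G"
  by (auto simp: adj_def)

lemma rtr_mono: "F \<subseteq> G \<Longrightarrow> (a,b) \<in> (adj ends F)\<^sup>* \<Longrightarrow> (a,b) \<in> (adj ends G)\<^sup>*"
  by (meson adj_mono rtrancl_mono subsetD)

lemma adj_insert: "ends f = {c,d} \<Longrightarrow> adj ends (insert f F) = adj ends F \<union> {(c,d),(d,c)}"
  by (auto simp: adj_def doubleton_eq_iff)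

lemma adj_step: "(a,b) \<in> adj ends F \<Longrightarrow> a \<in> verts ends F"
  by (auto simp: adj_def verts_def)

lemma rtr_verts: "(a,b) \<in> (adj ends F)\<^sup>* \<Longrightarrow> a \<noteq> b \<Longrightarrow> a \<in> verts ends F"
  by (erule converse_rtranclE) (auto dest: adj_step)

lemma not_verts_class: "c \<notin> verts ends F \<Longrightarrow> (adj ends F)\<^sup>* `` {c} = {c}"
  using rtr_verts by fastforce

lemma avoid: "(a,v) \<in> (adj ends {g\<in>F. v \<notin> ends g})\<^sup>* \<Longrightarrow> a = v"
  by (erule rtranclE) (auto simp: adj_def)

lemma rel_insert_class:
  assumes "sym R"
  shows "(R \<union> {(c,d),(d,c)})\<^sup>* `` {x} =
     (if x \<in> R\<^sup>*``{c} \<union> R\<^sup>*``{d} then R\<^sup>*``{c} \<union> R\<^sup>*``{d} else R\<^sup>*``{x})"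
    (is "?S\<^sup>*``{x} = ?rhs")
proof -
  have symr: "(a,b) \<in> R\<^sup>* \<Longrightarrow> (b,a) \<in> R\<^sup>*" for a b
    by (meson assms sym_rtrancl symD)
  have sub: "R\<^sup>* \<subseteq> ?S\<^sup>*" by (rule rtrancl_mono) auto
  have cd: "(c,d) \<in> ?S\<^sup>*" "(d,c) \<in> ?S\<^sup>*" by auto
  have ge: "?rhs \<subseteq> ?S\<^sup>*``{x}"
  proof (cases "x \<in> R\<^sup>*``{c} \<union> R\<^sup>*``{d}")
    case True
    have xc: "(x,c) \<in> ?S\<^sup>* \<and> (x,d) \<in> ?S\<^sup>*"
    proof (cases "(c,x) \<in> R\<^sup>*")
      case True
      then have "(x,c) \<in> ?S\<^sup>*" using symr sub by blast
      then show ?thesis using cd(1) by (meson rtrancl_trans)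
    next
      case False
      with \<open>x \<in> R\<^sup>*``{c} \<union> R\<^sup>*``{d}\<close> have "(d,x) \<in> R\<^sup>*" by blast
      then have "(x,d) \<in> ?S\<^sup>*" using symr sub by blast
      then show ?thesis using cd(2) by (meson rtrancl_trans)
    qed
    show ?thesis
    proof
      fix y assume "y \<in> ?rhs"
      then have "(c,y) \<in> R\<^sup>* \<or> (d,y) \<in> R\<^sup>*" using True by auto
      then have "(c,y) \<in> ?S\<^sup>* \<or> (d,y) \<in> ?S\<^sup>*" using sub by blast
      then show "y \<in> ?S\<^sup>*``{x}" using xc by (meson Image_singleton_iff rtrancl_trans)
    qed
  next
    case False
    then show ?thesis using sub by auto
  qed
  have le: "(x,y) \<in> ?S\<^sup>* \<Longrightarrow> y \<in> ?rhs" for y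
  proof (induction rule: rtrancl_induct)
    case base
    then show ?case by auto
  next
    case (step y z)
    let ?N = "R\<^sup>*``{c} \<union> R\<^sup>*``{d}"
    have yz: "(y,z) \<in> R \<or> (y = c \<and> z = d) \<or> (y = d \<and> z = c)" using step(2) by blast
    show ?case
    proof (cases "x \<in> ?N")
      case True
      then have yN: "y \<in> ?N" using step(3) by simp
      have "z \<in> ?N"
      proof -
        { assume "(y,z) \<in> R"
          then have "z \<in> ?N" using yN by (blast intro: rtrancl_into_rtrancl) }
        moreover have "c \<in> ?N" "d \<in> ?N" by auto
        ultimately show ?thesis using yz by blast
      qed
      then show ?thesis using True by simp
    next
      case False
      with step(3) have xy: "(x,y) \<in> R\<^sup>*" by simp
      have "y \<noteq> c"
      proof
        assume "y = c" then have "(c,x) \<in> R\<^sup>*" using xy symr by simp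
        then show False using False by simp
      qed
      moreover have "y \<noteq> d"
      proof
        assume "y = d" then have "(d,x) \<in> R\<^sup>*" using xy symr by simp
        then show False using False by simp
      qed
      ultimately have "(y,z) \<in> R" using yz by blast
      then have "(x,z) \<in> R\<^sup>*" using xy by simp
      then show ?thesis using False by simp
    qed
  qed
  show ?thesis
  proof (rule equalityI)
    show "?S\<^sup>*``{x} \<subseteq> ?rhs" using le by blast
  qed (rule ge)
qed



lemma class_eq:
  assumes "(x,y) \<in> (adj ends F)\<^sup>*"
  shows "(adj ends F)\<^sup>*``{y} = (adj ends F)\<^sup>*``{x}"
proof -
  have "(y,x) \<in> (adj ends F)\<^sup>*" by (rule rtr_sym[OF assms])
  show ?thesis
  proof (rule set_eqI)
    fix z
    show "z \<in> (adj ends F)\<^sup>*``{y} \<longleftrightarrow> z \<in> (adj ends F)\<^sup>*``{x}"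
      using assms \<open>(y,x) \<in> _\<close> by (meson Image_singleton_iff rtrancl_trans)
  qed
qed

locale fg =
  fixes V :: "'v set" and E :: "'e set" and ends :: "'e \<Rightarrow> 'v set"
  assumes G: "finite_graph V E ends"
begin

lemma finE: "finite E" using G by (simp add: finite_graph_def)
lemma finV: "finite V" using G by (simp add: finite_graph_def)
lemma ends_sub: "e \<in> E \<Longrightarrow> ends e \<subseteq> V" using G by (simp add: finite_graph_def)
lemma ends_ex: "e \<in> E \<Longrightarrow> \<exists>a b. a \<noteq> b \<and> ends e = {a,b}"
proof -
  assume "e \<in> E"
  then have "card (ends e) = 2" using G by (simp add: finite_graph_def)
  then show ?thesis unfolding card_2_iff by blast
qed
lemma ends_neq: "e \<in> E \<Longrightarrow> ends e = {c,d} \<Longrightarrow> c \<noteq> d"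
proof -
  assume a: "e \<in> E" "ends e = {c,d}"
  have "card (ends e) = 2" using G a(1) unfolding finite_graph_def by blast
  then have "card {c,d} = 2" using a by simp
  then show ?thesis
  proof -
    assume h: "card {c,d} = 2"
    show "c \<noteq> d"
    proof
      assume "c = d" with h show False by simp
    qed
  qed
qed

lemma verts_sub: "F \<subseteq> E \<Longrightarrow> verts ends F \<subseteq> V"
  unfolding verts_def using ends_sub by blast

lemma fin_verts: "F \<subseteq> E \<Longrightarrow> finite (verts ends F)"
  by (rule finite_subset[OF verts_sub finV])

lemma verts_insert: "verts ends (insert f F) = ends f \<union> verts ends F"
  by (simp add: verts_def)

lemma self_trancl:
  assumes "F \<subseteq> E" "x \<in> verts ends F"
  shows "(x,x) \<in> (adj ends F)\<^sup>+"
proof -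
  obtain g where g: "g \<in> F" "x \<in> ends g" using assms(2) by (auto simp: verts_def)
  obtain a b where ab: "a \<noteq> b" "ends g = {a,b}" using ends_ex g assms(1) by blast
  obtain y where "ends g = {x,y}" using ab g by auto
  then have "(x,y) \<in> adj ends F" "(y,x) \<in> adj ends F" using g by (auto simp: adj_def insert_commute)
  then show ?thesis by (meson r_into_trancl' trancl_into_trancl)
qed

lemma quot_eq:
  assumes "F \<subseteq> E"
  shows "verts ends F // (adj ends F)\<^sup>+ = (\<lambda>x. (adj ends F)\<^sup>*``{x}) ` verts ends F"
proof -
  have "(adj ends F)\<^sup>+``{x} = (adj ends F)\<^sup>*``{x}" if "x \<in> verts ends F" for x
    using self_trancl[OF assms that] by (auto simp: rtrancl_eq_or_trancl)
  then show ?thesis unfolding quotient_def by auto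
qed

lemma grank_alt:
  "F \<subseteq> E \<Longrightarrow> grank ends F = card (verts ends F) - card ((\<lambda>x. (adj ends F)\<^sup>*``{x}) ` verts ends F)"
  by (simp add: grank_def quot_eq)

lemma grank_insert:
  assumes F: "F \<subseteq> E" and f: "f \<in> E" and cd: "ends f = {c,d}"
  shows "grank ends (insert f F) = grank ends F + (if (c,d) \<in> (adj ends F)\<^sup>* then 0 else 1)"
proof -
  define R where "R = adj ends F"
  define N where "N x = R\<^sup>*``{x}" for x
  define V0 where "V0 = verts ends F"
  have cnd: "c \<noteq> d" using ends_neq f cd by blast
  have F1: "insert f F \<subseteq> E" using F f by simp
  have V1: "verts ends (insert f F) = insert c (insert d V0)"
    by (simp add: verts_insert cd V0_def)
  have N1: "(adj ends (insert f F))\<^sup>*``{x} = (if x \<in> N c \<union> N d then N c \<union> N d else N x)" for x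
    unfolding adj_insert[of ends f c d F, OF cd] N_def R_def by (rule rel_insert_class[OF sym_adj])
  have finV0: "finite V0" using fin_verts F V0_def by blast
  have Neq: "y \<in> N x \<Longrightarrow> N y = N x" for x y
  proof -
    assume "y \<in> N x"
    then have "(x,y) \<in> R\<^sup>*" by (simp add: N_def)
    then show ?thesis unfolding N_def R_def by (rule class_eq)
  qed
  have Nself: "x \<in> N x" for x by (simp add: N_def)
  show ?thesis
  proof (cases "(c,d) \<in> R\<^sup>*")
    case True
    have "c \<in> V0" using rtr_verts[OF True[unfolded R_def] cnd] unfolding V0_def .
    moreover have "d \<in> V0" using rtr_verts[OF rtr_sym[OF True[unfolded R_def]]] cnd unfolding V0_def by blast
    ultimately have VV: "verts ends (insert f F) = V0" using V1 by auto
    have "d \<in> N c" using True by (simp add: N_def)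
    then have Ndc: "N d = N c" by (rule Neq)
    have eqN: "(\<lambda>x. (adj ends (insert f F))\<^sup>*``{x}) = N"
    proof
      fix x
      show "(adj ends (insert f F))\<^sup>*``{x} = N x"
      proof (cases "x \<in> N c \<union> N d")
        case True2: True
        then have "x \<in> N c" using Ndc by simp
        then have "N x = N c" by (rule Neq)
        then show ?thesis using N1[of x] True2 Ndc by simp
      next
        case False
        then show ?thesis using N1[of x] by simp
      qed
    qed
    have "grank ends (insert f F) = card V0 - card (N ` V0)"
      using grank_alt[OF F1] VV eqN by metis
    moreover have "grank ends F = card V0 - card (N ` V0)"
      using grank_alt[OF F] unfolding N_def R_def V0_def by simp
    ultimately show ?thesis using True unfolding R_def by simp
  next
    case False
    have dnc: "d \<notin> N c" using False by (simp add: N_def)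
    have Ncd: "N c \<noteq> N d" using dnc Nself by metis
    define W where "W = V0 - (N c \<union> N d)"
    define M where "M = N ` W"
    have C1: "(\<lambda>x. (adj ends (insert f F))\<^sup>*``{x}) ` verts ends (insert f F) = insert (N c \<union> N d) M"
    proof -
      have "(\<lambda>x. (adj ends (insert f F))\<^sup>*``{x}) ` verts ends (insert f F)
           = (\<lambda>x. (if x \<in> N c \<union> N d then N c \<union> N d else N x)) ` (insert c (insert d V0))"
        using N1 V1 by simp
      also have "\<dots> = insert (N c \<union> N d) M"
        using Nself unfolding M_def W_def by (auto simp: image_iff)
      finally show ?thesis .
    qed
    have notM: "N c \<union> N d \<notin> M"
    proof
      assume "N c \<union> N d \<in> M"
      then obtain w where w: "w \<in> W" "N w = N c \<union> N d" by (auto simp: M_def)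
      then have "w \<in> N c \<union> N d" using Nself by blast
      then show False using w(1) W_def by blast
    qed
    have finM: "finite M" using finV0 by (simp add: M_def W_def)
    have cardC1: "card (insert (N c \<union> N d) M) = card M + 1" using notM finM by simp
    have C0: "N ` V0 = M \<union> N ` (V0 \<inter> {c,d})"
    proof -
      have "N ` V0 = N ` W \<union> N ` (V0 \<inter> (N c \<union> N d))" unfolding W_def by blast
      moreover have "N ` (V0 \<inter> (N c \<union> N d)) = N ` (V0 \<inter> {c,d})"
      proof
        show "N ` (V0 \<inter> (N c \<union> N d)) \<subseteq> N ` (V0 \<inter> {c,d})"
        proof
          fix z assume "z \<in> N ` (V0 \<inter> (N c \<union> N d))"
          then obtain y where y: "y \<in> V0" "y \<in> N c \<union> N d" "z = N y" by blast
          show "z \<in> N ` (V0 \<inter> {c,d})"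
          proof (cases "y \<in> N c")
            case True
            then have "N y = N c" by (rule Neq)
            moreover have "c \<in> V0"
            proof (rule ccontr)
              assume "c \<notin> V0"
              then have "N c = {c}" unfolding N_def R_def V0_def by (rule not_verts_class)
              then show False using True y(1) \<open>c \<notin> V0\<close> by auto
            qed
            ultimately show ?thesis using y by auto
          next
            case False
            then have yd: "y \<in> N d" using y by blast
            then have "N y = N d" by (rule Neq)
            moreover have "d \<in> V0"
            proof (rule ccontr)
              assume "d \<notin> V0"
              then have "N d = {d}" unfolding N_def R_def V0_def by (rule not_verts_class)
              then show False using yd y(1) \<open>d \<notin> V0\<close> by auto
            qed
            ultimately show ?thesis using y by auto
          qed
        qed
      next
        show "N ` (V0 \<inter> {c,d}) \<subseteq> N ` (V0 \<inter> (N c \<union> N d))"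
          using Nself by auto
      qed
      ultimately show ?thesis unfolding M_def by simp
    qed
    have disj: "M \<inter> N ` (V0 \<inter> {c,d}) = {}"
    proof -
      { fix w assume "w \<in> W" "N w = N c \<or> N w = N d"
        then have False using Nself unfolding W_def by blast }
      then show ?thesis unfolding M_def by auto
    qed
    have injN: "inj_on N (V0 \<inter> {c,d})"
      using Ncd by (auto simp: inj_on_def)
    have cardC0: "card (N ` V0) = card M + card (V0 \<inter> {c,d})"
      using C0 disj finM card_Un_disjoint[of M "N ` (V0 \<inter> {c,d})"] card_image[OF injN] by simp
    have cardV1: "card (insert c (insert d V0)) = card V0 + card ({c,d} - V0)"
    proof -
      have e: "insert c (insert d V0) = V0 \<union> ({c,d} - V0)" by auto
      have "card (V0 \<union> ({c,d} - V0)) = card V0 + card ({c,d} - V0)"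
        by (rule card_Un_disjoint) (simp_all add: finV0)
      then show ?thesis by (subst e)
    qed
    have two: "card (V0 \<inter> {c,d}) + card ({c,d} - V0) = 2"
    proof -
      have "card (V0 \<inter> {c,d}) + card ({c,d} - V0) = card {c,d}"
        using card_Int_Diff[of "{c,d}" V0] by (simp add: Int_commute)
      then show ?thesis using cnd by simp
    qed
    have le: "card (N ` V0) \<le> card V0" using card_image_le finV0 by blast
    have g1: "grank ends (insert f F) = card V0 + card ({c,d} - V0) - (card M + 1)"
      using grank_alt[OF F1] C1 cardC1 V1 cardV1 by simp
    have g0: "grank ends F = card V0 - (card M + card (V0 \<inter> {c,d}))"
      using grank_alt[OF F] cardC0 unfolding N_def R_def V0_def by simp
    show ?thesis using g1 g0 two le cardC0 False unfolding R_def by simp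
  qed
qed

end


fun gr :: "('e set \<Rightarrow> real) \<Rightarrow> 'e set \<Rightarrow> 'e list \<Rightarrow> 'e \<Rightarrow> real" where
  "gr r A [] y = 0"
| "gr r A (h # L) y = (if y = h then r (insert h A) - r A else gr r (insert h A) L y)"

lemma gr_out: "y \<notin> set L \<Longrightarrow> gr r A L y = 0"
  by (induction L arbitrary: A) auto

lemma gr_sum: "distinct L \<Longrightarrow> sum (gr r A L) (set L) = r (A \<union> set L) - r A"
proof (induction L arbitrary: A)
  case Nil
  then show ?case by simp
next
  case (Cons h L)
  have "sum (gr r A (h # L)) (set (h # L)) = gr r A (h#L) h + sum (gr r A (h # L)) (set L)"
    using Cons.prems by simp
  also have "sum (gr r A (h # L)) (set L) = sum (gr r (insert h A) L) (set L)"
    using Cons.prems by (intro sum.cong) auto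
  also have "\<dots> = r (insert h A \<union> set L) - r (insert h A)"
    using Cons by simp
  finally show ?case by simp
qed

lemma gr_app1: "y \<notin> set L1 \<Longrightarrow> gr r A (L1 @ L2) y = gr r (A \<union> set L1) L2 y"
  by (induction L1 arbitrary: A) auto

lemma gr_app2: "y \<in> set L1 \<Longrightarrow> gr r A (L1 @ L2) y = gr r A (L1 @ L2') y"
  by (induction L1 arbitrary: A) auto

lemma gr_nonneg:
  assumes mono: "\<And>X h. X \<subseteq> U \<Longrightarrow> h \<in> U \<Longrightarrow> r X \<le> r (insert h X)"
  shows "A \<subseteq> U \<Longrightarrow> set L \<subseteq> U \<Longrightarrow> gr r A L y \<ge> 0"
proof (induction L arbitrary: A)
  case Nil
  then show ?case by simp
next
  case (Cons h L)
  then show ?case using mono[of A h] by auto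
qed

lemma gr_le:
  assumes DR: "\<And>X Y h. X \<subseteq> Y \<Longrightarrow> Y \<subseteq> U \<Longrightarrow> h \<in> U \<Longrightarrow> r (insert h Y) - r Y \<le> r (insert h X) - r X"
  shows "distinct L \<Longrightarrow> A \<subseteq> U \<Longrightarrow> set L \<subseteq> U \<Longrightarrow> T \<subseteq> set L \<Longrightarrow> A' \<subseteq> A \<Longrightarrow>
     sum (gr r A L) T \<le> r (A' \<union> T) - r A'"
proof (induction L arbitrary: A A' T)
  case Nil
  then show ?case by simp
next
  case (Cons h L)
  show ?case
  proof (cases "h \<in> T")
    case False
    then have T: "T \<subseteq> set L" using Cons.prems by auto
    have "sum (gr r A (h # L)) T = sum (gr r (insert h A) L) T"
      using False by (intro sum.cong) auto
    also have "\<dots> \<le> r (A' \<union> T) - r A'"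
      using Cons.IH[of "insert h A" T A'] Cons.prems T by auto
    finally show ?thesis .
  next
    case True
    define T' where "T' = T - {h}"
    have T': "T' \<subseteq> set L" "T = insert h T'" "h \<notin> T'" using Cons.prems True by (auto simp: T'_def)
    have finT': "finite T'" using T'(1) finite_subset by blast
    have "sum (gr r A (h # L)) T = gr r A (h#L) h + sum (gr r A (h # L)) T'"
      using T' finT' by simp
    also have "sum (gr r A (h # L)) T' = sum (gr r (insert h A) L) T'"
      using T' by (intro sum.cong) auto
    also have "\<dots> \<le> r (insert h A' \<union> T') - r (insert h A')"
      using Cons.IH[of "insert h A" T' "insert h A'"] Cons.prems T' by auto
    also have "gr r A (h#L) h = r (insert h A) - r A" by simp
    also have "r (insert h A) - r A \<le> r (insert h A') - r A'"
      using DR[of A' A h] Cons.prems by auto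
    finally show ?thesis using T' by simp
  qed
qed

lemma telescope:
  fixes r :: "'e set \<Rightarrow> real"
  assumes md: "\<And>P e f. P \<subseteq> U \<Longrightarrow> e \<in> A \<Longrightarrow> f \<in> B \<Longrightarrow>
      r (insert e (insert f P)) + r P = r (insert e P) + r (insert f P)"
    and AU: "A \<subseteq> U" and BU: "B \<subseteq> U" and fA: "finite A" and fB: "finite B"
  shows "X \<subseteq> A \<Longrightarrow> Y \<subseteq> B \<Longrightarrow> r (X \<union> Y) + r {} = r X + r Y"
proof -
  have inner: "r (insert f (Z \<union> Y)) - r (Z \<union> Y) = r (insert f Y) - r Y"
    if "Z \<subseteq> A" "Y \<subseteq> B" "f \<in> B" for Z Y f
  proof -
    have "finite Z" using that fA finite_subset by blast
    then show ?thesis using that(1)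
    proof (induction Z rule: finite_induct)
      case empty
      then show ?case by simp
    next
      case (insert e Z)
      have PU: "Z \<union> Y \<subseteq> U" using insert.prems that AU BU by auto
      have "r (insert e (insert f (Z \<union> Y))) + r (Z \<union> Y) = r (insert e (Z \<union> Y)) + r (insert f (Z \<union> Y))"
        using md[OF PU _ that(3)] insert.prems by auto
      moreover have "r (insert f (Z \<union> Y)) - r (Z \<union> Y) = r (insert f Y) - r Y"
        using insert by auto
      ultimately show ?case by (simp add: insert_commute)
    qed
  qed
  assume XA: "X \<subseteq> A" and YB: "Y \<subseteq> B"
  have "finite Y" using YB fB finite_subset by blast
  then show ?thesis using YB
  proof (induction Y rule: finite_induct)
    case empty
    then show ?case by simp
  next
    case (insert f Y)
    have "r (X \<union> insert f Y) = r (insert f (X \<union> Y))" by simp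
    also have "\<dots> = r (X \<union> Y) + (r (insert f Y) - r Y)"
      using inner[OF XA, of Y f] insert.prems by auto
    finally show ?case using insert by simp
  qed
qed

context fg begin

lemma grank_empty: "grank ends {} = 0"
  by (simp add: grank_def verts_def)

lemma grank_mono_insert: "F \<subseteq> E \<Longrightarrow> f \<in> E \<Longrightarrow> grank ends F \<le> grank ends (insert f F)"
proof -
  assume a: "F \<subseteq> E" "f \<in> E"
  then obtain c d where "c \<noteq> d" "ends f = {c,d}" using ends_ex by blast
  then show ?thesis using grank_insert[OF a \<open>ends f = {c,d}\<close>] by simp
qed

lemma grank_mono_aux: "finite D \<Longrightarrow> D \<subseteq> E \<Longrightarrow> F \<subseteq> E \<Longrightarrow> grank ends F \<le> grank ends (D \<union> F)"
proof (induction D rule: finite_induct)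
  case empty
  then show ?case by simp
next
  case (insert f D)
  then have "grank ends (D \<union> F) \<le> grank ends (insert f (D \<union> F))"
    by (intro grank_mono_insert) auto
  then show ?case using insert by simp
qed

lemma grank_mono: "F \<subseteq> G \<Longrightarrow> G \<subseteq> E \<Longrightarrow> grank ends F \<le> grank ends G"
proof -
  assume a: "F \<subseteq> G" "G \<subseteq> E"
  have "finite (G - F)" using a finE finite_subset by blast
  then have "grank ends F \<le> grank ends ((G - F) \<union> F)"
    using a by (intro grank_mono_aux) auto
  moreover have "(G - F) \<union> F = G" using a by auto
  ultimately show ?thesis by simp
qed

lemma grank_single: "e \<in> E \<Longrightarrow> grank ends {e} = 1"
proof -
  assume a: "e \<in> E"
  then obtain c d where cd: "c \<noteq> d" "ends e = {c,d}" using ends_ex by blast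
  have "(c,d) \<notin> (adj ends {})\<^sup>*" using cd(1) by (simp add: adj_def)
  then show ?thesis using grank_insert[of "{}" e c d] a cd grank_empty by simp
qed

lemma grank_pos: "F \<subseteq> E \<Longrightarrow> F \<noteq> {} \<Longrightarrow> grank ends F \<ge> 1"
proof -
  assume a: "F \<subseteq> E" "F \<noteq> {}"
  then obtain e where "e \<in> F" by blast
  then show ?thesis using grank_mono[of "{e}" F] grank_single[of e] a by auto
qed

lemma grank_dimret:
  assumes "F \<subseteq> G" "G \<subseteq> E" "f \<in> E"
  shows "real (grank ends (insert f G)) - real (grank ends G) \<le> real (grank ends (insert f F)) - real (grank ends F)"
proof -
  obtain c d where cd: "c \<noteq> d" "ends f = {c,d}" using ends_ex assms by blast
  have FE: "F \<subseteq> E" using assms by auto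
  have m: "(c,d) \<in> (adj ends F)\<^sup>* \<Longrightarrow> (c,d) \<in> (adj ends G)\<^sup>*" by (rule rtr_mono[OF assms(1)])
  show ?thesis using grank_insert[OF FE assms(3) cd(2)] grank_insert[OF assms(2,3) cd(2)] m by auto
qed

definition R :: "'e set \<Rightarrow> real" where "R S = real (grank ends S)"

lemma gr_in_base:
  assumes "distinct L" "set L = E"
  shows "gr R {} L \<in> base_polytope E ends"
proof -
  let ?g = "gr R {} L"
  have out: "\<forall>e. e \<notin> E \<longrightarrow> ?g e = 0" using gr_out assms by metis
  have nn: "\<forall>e\<in>E. ?g e \<ge> 0"
  proof
    fix e assume "e \<in> E"
    show "?g e \<ge> 0"
      by (rule gr_nonneg[where U = E]) (auto simp: R_def grank_mono_insert assms)
  qed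
  have le: "\<forall>S\<subseteq>E. sum ?g S \<le> real (grank ends S)"
  proof (intro allI impI)
    fix S assume "S \<subseteq> E"
    have "sum ?g S \<le> R ({} \<union> S) - R {}"
      by (rule gr_le[where U = E]) (use assms \<open>S \<subseteq> E\<close> grank_dimret in \<open>auto simp: R_def\<close>)
    then show "sum ?g S \<le> real (grank ends S)" by (simp add: R_def grank_empty)
  qed
  have eq: "sum ?g E = real (grank ends E)"
    using gr_sum[OF assms(1), of R "{}"] assms by (simp add: R_def grank_empty)
  show ?thesis unfolding base_polytope_def using out nn le eq by blast
qed

end


definition bicon :: "('e \<Rightarrow> 'v set) \<Rightarrow> 'v set \<Rightarrow> 'e set \<Rightarrow> bool" where
  "bicon ends VH EH \<longleftrightarrow> connected_graph ends VH EH \<and> \<not> has_cut_vertex ends VH EH"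

lemma rtr_trans3: "(a,b) \<in> r\<^sup>* \<Longrightarrow> (b,c) \<in> r\<^sup>* \<Longrightarrow> (c,d) \<in> r\<^sup>* \<Longrightarrow> (a,d) \<in> r\<^sup>*"
  by (meson rtrancl_trans)

lemma robust:
  assumes sub: "\<forall>g\<in>EH. ends g \<subseteq> VH" and bc: "bicon ends VH EH"
    and p: "p \<in> VH - {v}" and q: "q \<in> VH - {v}"
  shows "(p,q) \<in> (adj ends {g\<in>EH. v \<notin> ends g})\<^sup>*"
proof (cases "v \<in> VH")
  case True
  then show ?thesis using bc p q unfolding bicon_def has_cut_vertex_def by blast
next
  case False
  then have "{g\<in>EH. v \<notin> ends g} = EH" using sub by blast
  then show ?thesis using bc p q unfolding bicon_def connected_graph_def by simp
qed

lemma bicon_union: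
  assumes sub1: "\<forall>g\<in>EH1. ends g \<subseteq> VH1" and bc1: "bicon ends VH1 EH1"
    and sub2: "\<forall>g\<in>EH2. ends g \<subseteq> VH2" and bc2: "bicon ends VH2 EH2"
    and ab: "a \<noteq> b" "a \<in> VH1" "a \<in> VH2" "b \<in> VH1" "b \<in> VH2"
  shows "bicon ends (VH1 \<union> VH2) (EH1 \<union> EH2)"
proof -
  have m1: "(p,q) \<in> (adj ends {g\<in>EH1. v \<notin> ends g})\<^sup>* \<Longrightarrow> (p,q) \<in> (adj ends {g\<in>EH1 \<union> EH2. v \<notin> ends g})\<^sup>*" for p q v
    by (rule rtr_mono) auto
  have m2: "(p,q) \<in> (adj ends {g\<in>EH2. v \<notin> ends g})\<^sup>* \<Longrightarrow> (p,q) \<in> (adj ends {g\<in>EH1 \<union> EH2. v \<notin> ends g})\<^sup>*" for p q v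
    by (rule rtr_mono) auto
  have toshared: "\<exists>w. w \<in> VH1 \<and> w \<in> VH2 \<and> w \<noteq> v" for v
    using ab by blast
  have reach: "(p,w) \<in> (adj ends {g\<in>EH1 \<union> EH2. v \<notin> ends g})\<^sup>*"
    if "p \<in> VH1 \<union> VH2" "p \<noteq> v" "w \<in> VH1" "w \<in> VH2" "w \<noteq> v" for p w v
  proof (cases "p \<in> VH1")
    case True
    then show ?thesis using robust[OF sub1 bc1, of p v w] that m1 by blast
  next
    case False
    then have "p \<in> VH2" using that by blast
    then show ?thesis using robust[OF sub2 bc2, of p v w] that m2 by blast
  qed
  have nocut: "\<not> has_cut_vertex ends (VH1 \<union> VH2) (EH1 \<union> EH2)"
  proof -
    { fix v p q assume "v \<in> VH1 \<union> VH2" "p \<in> VH1 \<union> VH2 - {v}" "q \<in> VH1 \<union> VH2 - {v}"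
      obtain w where w: "w \<in> VH1" "w \<in> VH2" "w \<noteq> v" using toshared by blast
      have "(p,w) \<in> (adj ends {g\<in>EH1 \<union> EH2. v \<notin> ends g})\<^sup>*"
        using reach \<open>p \<in> _\<close> w by blast
      moreover have "(q,w) \<in> (adj ends {g\<in>EH1 \<union> EH2. v \<notin> ends g})\<^sup>*"
        using reach \<open>q \<in> _\<close> w by blast
      ultimately have "(p,q) \<in> (adj ends {g\<in>EH1 \<union> EH2. v \<notin> ends g})\<^sup>*"
        by (rule rtrancl_trans[OF _ rtr_sym]) }
    then show ?thesis unfolding has_cut_vertex_def by blast
  qed
  have con: "connected_graph ends (VH1 \<union> VH2) (EH1 \<union> EH2)"
  proof -
    have c1: "(p,q) \<in> (adj ends EH1)\<^sup>* \<Longrightarrow> (p,q) \<in> (adj ends (EH1 \<union> EH2))\<^sup>*" for p q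
      by (rule rtr_mono) auto
    have c2: "(p,q) \<in> (adj ends EH2)\<^sup>* \<Longrightarrow> (p,q) \<in> (adj ends (EH1 \<union> EH2))\<^sup>*" for p q
      by (rule rtr_mono) auto
    have r: "(p,a) \<in> (adj ends (EH1 \<union> EH2))\<^sup>*" if "p \<in> VH1 \<union> VH2" for p
      using that bc1 bc2 ab c1 c2 unfolding bicon_def connected_graph_def by blast
    show ?thesis unfolding connected_graph_def
    proof (intro conjI ballI)
      show "VH1 \<union> VH2 \<noteq> {}" using ab by blast
    next
      fix p q assume "p \<in> VH1 \<union> VH2" "q \<in> VH1 \<union> VH2"
      then show "(p,q) \<in> (adj ends (EH1 \<union> EH2))\<^sup>*"
        using r by (meson rtrancl_trans[OF _ rtr_sym])
    qed
  qed
  show ?thesis using nocut con by (simp add: bicon_def)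
qed

lemma minpath:
  assumes conn: "(x,y) \<in> (adj ends Q)\<^sup>*"
    and minQ: "\<And>Q'. Q' \<subset> Q \<Longrightarrow> (x,y) \<notin> (adj ends Q')\<^sup>*"
    and u: "u \<in> verts ends Q" and uv: "v \<noteq> u"
  shows "(u,x) \<in> (adj ends {g\<in>Q. v \<notin> ends g})\<^sup>* \<or> (u,y) \<in> (adj ends {g\<in>Q. v \<notin> ends g})\<^sup>*"
proof (rule ccontr)
  define Qv where "Qv = {g\<in>Q. v \<notin> ends g}"
  define D where "D = (adj ends Qv)\<^sup>*``{u}"
  define Q' where "Q' = {g\<in>Q. ends g \<inter> D = {}}"
  assume nc: "\<not> ((u,x) \<in> (adj ends {g\<in>Q. v \<notin> ends g})\<^sup>* \<or> (u,y) \<in> (adj ends {g\<in>Q. v \<notin> ends g})\<^sup>*)"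
  have xD: "x \<notin> D" using nc by (simp add: D_def Qv_def)
  have yD: "y \<notin> D" using nc by (simp add: D_def Qv_def)
  have vD: "v \<notin> D"
  proof
    assume "v \<in> D"
    then have "(u,v) \<in> (adj ends {g\<in>Q. v \<notin> ends g})\<^sup>*" by (simp add: D_def Qv_def)
    then have "u = v" by (rule avoid)
    then show False using uv by simp
  qed
  have Dstep: "w' \<in> D" if "w \<in> D" "g \<in> Q" "v \<notin> ends g" "ends g = {w,w'}" for w w' g
  proof -
    have "(w,w') \<in> adj ends Qv" using that by (auto simp: adj_def Qv_def)
    then show ?thesis using that(1) by (auto simp: D_def intro: rtrancl_into_rtrancl)
  qed
  have key: "(w \<notin> D \<longrightarrow> (x,w) \<in> (adj ends Q')\<^sup>*) \<and> (w \<in> D \<longrightarrow> (x,v) \<in> (adj ends Q')\<^sup>*)"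
    if "(x,w) \<in> (adj ends Q)\<^sup>*" for w
    using that
  proof (induction rule: rtrancl_induct)
    case base
    then show ?case using xD by simp
  next
    case (step w w')
    obtain g where g: "g \<in> Q" "ends g = {w,w'}" using step(2) by (auto simp: adj_def)
    have g': "ends g = {w',w}" using g by (simp add: insert_commute)
    show ?case
    proof (cases "w \<in> D")
      case True
      then have xv: "(x,v) \<in> (adj ends Q')\<^sup>*" using step(3) by simp
      show ?thesis
      proof (cases "w' \<in> D")
        case True
        then show ?thesis using xv by simp
      next
        case False
        have "v \<in> ends g" using Dstep[OF \<open>w \<in> D\<close> g(1) _ g(2)] False by blast
        then have "v = w'" using g True vD by auto
        then show ?thesis using xv False by simp
      qed
    next
      case False
      then have xw: "(x,w) \<in> (adj ends Q')\<^sup>*" using step(3) by simp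
      show ?thesis
      proof (cases "w' \<in> D")
        case True
        have "v \<in> ends g" using Dstep[OF \<open>w' \<in> D\<close> g(1) _ g'] False by blast
        then have "v = w" using g True vD by auto
        then show ?thesis using xw True by simp
      next
        case False2: False
        have "g \<in> Q'" using g False False2 by (auto simp: Q'_def)
        then have "(w,w') \<in> adj ends Q'" using g by (auto simp: adj_def)
        then show ?thesis using xw False2 by (simp add: rtrancl_into_rtrancl)
      qed
    qed
  qed
  have xy': "(x,y) \<in> (adj ends Q')\<^sup>*" using key[OF conn] yD by simp
  obtain g0 where g0: "g0 \<in> Q" "u \<in> ends g0" using u by (auto simp: verts_def)
  have "u \<in> D" by (simp add: D_def)
  then have "g0 \<notin> Q'" using g0 by (auto simp: Q'_def)
  then have "Q' \<subset> Q" using g0 by (auto simp: Q'_def)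
  then show False using minQ xy' by blast
qed

lemma ear:
  assumes sub: "\<forall>g\<in>EH. ends g \<subseteq> VH" and bc: "bicon ends VH EH"
    and xV: "x \<in> VH" and yV: "y \<in> VH" and xy: "x \<noteq> y"
    and conn: "(x,y) \<in> (adj ends Q)\<^sup>*"
    and minQ: "\<And>Q'. Q' \<subset> Q \<Longrightarrow> (x,y) \<notin> (adj ends Q')\<^sup>*"
  shows "bicon ends (VH \<union> verts ends Q) (EH \<union> Q)"
proof -
  have mQ: "(p,q) \<in> (adj ends {g\<in>Q. v \<notin> ends g})\<^sup>* \<Longrightarrow> (p,q) \<in> (adj ends {g\<in>EH \<union> Q. v \<notin> ends g})\<^sup>*" for p q v
    by (rule rtr_mono) auto
  have mH: "(p,q) \<in> (adj ends {g\<in>EH. v \<notin> ends g})\<^sup>* \<Longrightarrow> (p,q) \<in> (adj ends {g\<in>EH \<union> Q. v \<notin> ends g})\<^sup>*" for p q v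
    by (rule rtr_mono) auto
  have reach: "\<exists>h\<in>VH-{v}. (a,h) \<in> (adj ends {g\<in>EH \<union> Q. v \<notin> ends g})\<^sup>*"
    if "a \<in> VH \<union> verts ends Q" "a \<noteq> v" for a v
  proof (cases "a \<in> VH")
    case True
    then show ?thesis using that by blast
  next
    case False
    then have aQ: "a \<in> verts ends Q" using that by blast
    have "v \<noteq> a" using that by blast
    from minpath[OF conn minQ aQ this]
    show ?thesis
    proof
      assume h: "(a,x) \<in> (adj ends {g\<in>Q. v \<notin> ends g})\<^sup>*"
      have "x \<noteq> v"
      proof
        assume "x = v"
        then have "a = v" using h avoid by metis
        then show False using that by simp
      qed
      then show ?thesis using h mQ xV by blast
    next
      assume h: "(a,y) \<in> (adj ends {g\<in>Q. v \<notin> ends g})\<^sup>*"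
      have "y \<noteq> v"
      proof
        assume "y = v"
        then have "a = v" using h avoid by metis
        then show False using that by simp
      qed
      then show ?thesis using h mQ yV by blast
    qed
  qed
  have nocut: "\<not> has_cut_vertex ends (VH \<union> verts ends Q) (EH \<union> Q)"
  proof -
    { fix v p q assume pq: "p \<in> VH \<union> verts ends Q - {v}" "q \<in> VH \<union> verts ends Q - {v}"
      obtain hp where hp: "hp \<in> VH - {v}" "(p,hp) \<in> (adj ends {g\<in>EH \<union> Q. v \<notin> ends g})\<^sup>*"
        using reach pq(1) by blast
      obtain hq where hq: "hq \<in> VH - {v}" "(q,hq) \<in> (adj ends {g\<in>EH \<union> Q. v \<notin> ends g})\<^sup>*"
        using reach pq(2) by blast
      have "(hp,hq) \<in> (adj ends {g\<in>EH \<union> Q. v \<notin> ends g})\<^sup>*"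
        using robust[OF sub bc hp(1) hq(1)] mH by blast
      then have "(p,q) \<in> (adj ends {g\<in>EH \<union> Q. v \<notin> ends g})\<^sup>*"
        using hp(2) rtr_sym[OF hq(2)] by (meson rtrancl_trans) }
    then show ?thesis unfolding has_cut_vertex_def by blast
  qed
  have con: "connected_graph ends (VH \<union> verts ends Q) (EH \<union> Q)"
  proof -
    have mK: "(p,q) \<in> (adj ends {g\<in>EH \<union> Q. v \<notin> ends g})\<^sup>* \<Longrightarrow> (p,q) \<in> (adj ends (EH \<union> Q))\<^sup>*" for p q v
      by (rule rtr_mono) auto
    have mE: "(p,q) \<in> (adj ends EH)\<^sup>* \<Longrightarrow> (p,q) \<in> (adj ends (EH \<union> Q))\<^sup>*" for p q
      by (rule rtr_mono) auto
    have toH: "\<exists>h\<in>VH. (a,h) \<in> (adj ends (EH \<union> Q))\<^sup>*" if aK: "a \<in> VH \<union> verts ends Q" for a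
    proof (cases "a \<in> VH")
      case True then show ?thesis by blast
    next
      case False
      then have "a \<noteq> x" using xV by blast
      then obtain h where "h \<in> VH - {x}" "(a,h) \<in> (adj ends {g\<in>EH \<union> Q. x \<notin> ends g})\<^sup>*"
        using reach[OF aK \<open>a \<noteq> x\<close>] by blast
      then show ?thesis using mK by blast
    qed
    have toX: "(a,x) \<in> (adj ends (EH \<union> Q))\<^sup>*" if aK: "a \<in> VH \<union> verts ends Q" for a
    proof -
      obtain h where h: "h \<in> VH" "(a,h) \<in> (adj ends (EH \<union> Q))\<^sup>*" using toH[OF aK] by blast
      have "(h,x) \<in> (adj ends EH)\<^sup>*" using bc h(1) xV unfolding bicon_def connected_graph_def by blast
      then show ?thesis using h(2) mE by (meson rtrancl_trans)
    qed
    show ?thesis unfolding connected_graph_def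
    proof (intro conjI ballI)
      show "VH \<union> verts ends Q \<noteq> {}" using xV by blast
    next
      fix a b assume "a \<in> VH \<union> verts ends Q" "b \<in> VH \<union> verts ends Q"
      then show "(a,b) \<in> (adj ends (EH \<union> Q))\<^sup>*"
        using toX by (meson rtrancl_trans[OF _ rtr_sym])
    qed
  qed
  show ?thesis using nocut con by (simp add: bicon_def)
qed

lemma dec:
  assumes e: "ends e = {a,b}"
  shows "(u,w) \<in> (adj ends (insert e P))\<^sup>* \<Longrightarrow> (u,w) \<in> (adj ends P)\<^sup>* \<or>
    ((u,a) \<in> (adj ends P)\<^sup>* \<and> (b,w) \<in> (adj ends P)\<^sup>*) \<or> ((u,b) \<in> (adj ends P)\<^sup>* \<and> (a,w) \<in> (adj ends P)\<^sup>*)"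
proof (induction rule: rtrancl_induct)
  case base
  then show ?case by simp
next
  case (step w w')
  let ?R = "(adj ends P)\<^sup>*"
  have st: "(w,w') \<in> adj ends P \<or> (w = a \<and> w' = b) \<or> (w = b \<and> w' = a)"
    using step(2) unfolding adj_insert[of ends e a b P, OF e] by blast
  show ?case
  proof (cases "(w,w') \<in> adj ends P")
    case True
    then have "(w,w') \<in> ?R" by simp
    then show ?thesis using step(3) by (meson rtrancl_trans)
  next
    case False
    then have ab: "(w = a \<and> w' = b) \<or> (w = b \<and> w' = a)" using st by blast
    from step(3) show ?thesis
    proof (elim disjE conjE)
      assume "(u,w) \<in> ?R"
      then show ?thesis using ab by auto
    next
      assume h: "(u,a) \<in> ?R" "(b,w) \<in> ?R"
      show ?thesis
      proof (cases "w = a")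
        case True
        then have "(a,b) \<in> ?R" using rtr_sym[OF h(2)] by simp
        then have "(u,b) \<in> ?R" using h(1) by (meson rtrancl_trans)
        then show ?thesis using ab True by auto
      next
        case False
        then show ?thesis using ab h by auto
      qed
    next
      assume h: "(u,b) \<in> ?R" "(a,w) \<in> ?R"
      show ?thesis
      proof (cases "w = b")
        case True
        then have "(b,a) \<in> ?R" using rtr_sym[OF h(2)] by simp
        then have "(u,a) \<in> ?R" using h(1) by (meson rtrancl_trans)
        then show ?thesis using ab True by auto
      next
        case False
        then show ?thesis using ab h by auto
      qed
    qed
  qed
qed



context fg begin

lemma block_props:
  assumes "is_block V E ends VH EH"
  shows "VH \<subseteq> V" "EH \<subseteq> E" "\<forall>g\<in>EH. ends g \<subseteq> VH" "bicon ends VH EH"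
  using assms unfolding is_block_def is_subgraph_def bicon_def by auto

lemma block_max:
  assumes "is_block V E ends VH EH" "is_subgraph V E ends VH' EH'" "bicon ends VH' EH'"
    "VH \<subseteq> VH'" "EH \<subseteq> EH'"
  shows "VH' = VH \<and> EH' = EH"
  using assms unfolding is_block_def bicon_def by blast

lemma block_unique:
  assumes b1: "is_block V E ends VH1 EH1" and b2: "is_block V E ends VH2 EH2"
    and e: "e \<in> EH1" "e \<in> EH2"
  shows "EH1 = EH2"
proof -
  have eE: "e \<in> E" using block_props(2)[OF b1] e by blast
  obtain a b where ab: "a \<noteq> b" "ends e = {a,b}" using ends_ex[OF eE] by blast
  have in1: "a \<in> VH1" "b \<in> VH1" using block_props(3)[OF b1] e ab by auto
  have in2: "a \<in> VH2" "b \<in> VH2" using block_props(3)[OF b2] e ab by auto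
  have bc: "bicon ends (VH1 \<union> VH2) (EH1 \<union> EH2)"
    using bicon_union[OF block_props(3,4)[OF b1] block_props(3,4)[OF b2] ab(1) in1(1) in2(1) in1(2) in2(2)] .
  have sg: "is_subgraph V E ends (VH1 \<union> VH2) (EH1 \<union> EH2)"
    using block_props[OF b1] block_props[OF b2] unfolding is_subgraph_def by blast
  have "EH1 \<union> EH2 = EH1" using block_max[OF b1 sg bc] by blast
  moreover have "EH1 \<union> EH2 = EH2" using block_max[OF b2 sg bc] by blast
  ultimately show ?thesis by simp
qed

lemma k2_bicon:
  assumes "e \<in> E"
  shows "bicon ends (ends e) {e}"
proof -
  obtain a b where ab: "a \<noteq> b" "ends e = {a,b}" using ends_ex[OF assms] by blast
  have "(a,b) \<in> adj ends {e}" "(b,a) \<in> adj ends {e}" using ab by (auto simp: adj_def insert_commute)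
  then have c: "(p,q) \<in> (adj ends {e})\<^sup>*" if "p \<in> {a,b}" "q \<in> {a,b}" for p q
    using that by auto
  have "connected_graph ends (ends e) {e}" unfolding connected_graph_def using ab c by auto
  moreover have "\<not> has_cut_vertex ends (ends e) {e}" unfolding has_cut_vertex_def using ab by auto
  ultimately show ?thesis by (simp add: bicon_def)
qed

lemma block_exists:
  assumes eE: "e \<in> E"
  shows "\<exists>VH EH. is_block V E ends VH EH \<and> e \<in> EH"
proof -
  define S where "S = {p. is_subgraph V E ends (fst p) (snd p) \<and> bicon ends (fst p) (snd p) \<and> e \<in> snd p}"
  define \<mu> where "\<mu> p = card (fst p) + card (snd p)" for p :: "'v set \<times> 'e set"
  have finS: "finite S"
  proof (rule finite_subset)
    show "S \<subseteq> Pow V \<times> Pow E" unfolding S_def is_subgraph_def by auto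
    show "finite (Pow V \<times> Pow E)" using finV finE by simp
  qed
  have k2: "(ends e, {e}) \<in> S"
    unfolding S_def is_subgraph_def using k2_bicon[OF eE] ends_sub[OF eE] eE by auto
  define m where "m = Max (\<mu> ` S)"
  have "m \<in> \<mu> ` S" unfolding m_def using finS k2 by (intro Max_in) auto
  then obtain p where p: "p \<in> S" "\<mu> p = m" by blast
  have pmax: "\<mu> q \<le> \<mu> p" if "q \<in> S" for q
    unfolding p(2) m_def using finS that by (intro Max_ge) auto
  obtain VH EH where pe: "p = (VH, EH)" by (cases p)
  have sgp: "is_subgraph V E ends VH EH" "bicon ends VH EH" "e \<in> EH" using p(1) pe by (auto simp: S_def)
  have mx: "VH' = VH \<and> EH' = EH"
    if h: "is_subgraph V E ends VH' EH' \<and> connected_graph ends VH' EH' \<and>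
        \<not> has_cut_vertex ends VH' EH' \<and> VH \<subseteq> VH' \<and> EH \<subseteq> EH'" for VH' EH'
  proof -
    have "(VH', EH') \<in> S" using h sgp(3) by (auto simp: S_def bicon_def)
    then have le: "card VH' + card EH' \<le> card VH + card EH" using pmax pe by (force simp: \<mu>_def)
    have fV': "finite VH'" using h finV finite_subset unfolding is_subgraph_def by blast
    have fE': "finite EH'" using h finE finite_subset unfolding is_subgraph_def by blast
    have c1: "card VH \<le> card VH'" using h fV' by (simp add: card_mono)
    have c2: "card EH \<le> card EH'" using h fE' by (simp add: card_mono)
    have "card VH = card VH'" "card EH = card EH'" using le c1 c2 by auto
    then show "VH' = VH \<and> EH' = EH" using h fV' fE' card_subset_eq by metis
  qed
  have "is_block V E ends VH EH"
    unfolding is_block_def using sgp mx by (auto simp: bicon_def)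
  then show ?thesis using sgp(3) by blast
qed

lemma key:
  assumes blk: "is_block V E ends VH EH" and e: "e \<in> EH" and f: "f \<in> E" and P: "P \<subseteq> E"
    and cd: "ends f = {c,d}" and c1: "(c,d) \<in> (adj ends (insert e P))\<^sup>*" and c0: "(c,d) \<notin> (adj ends P)\<^sup>*"
  shows "f \<in> EH"
proof -
  note bp = block_props[OF blk]
  have eE: "e \<in> E" using bp e by blast
  obtain a b where ab: "a \<noteq> b" "ends e = {a,b}" using ends_ex[OF eE] by blast
  have abV: "a \<in> VH" "b \<in> VH" using bp(3) e ab by auto
  let ?R = "(adj ends P)\<^sup>*"
  let ?S = "(adj ends (insert f P))\<^sup>*"
  have fst: "(c,d) \<in> adj ends (insert f P)" "(d,c) \<in> adj ends (insert f P)"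
    using cd by (auto simp: adj_def insert_commute)
  have mon: "(p,q) \<in> ?R \<Longrightarrow> (p,q) \<in> ?S" for p q by (rule rtr_mono) auto
  have conn: "(a,b) \<in> ?S \<and> (a,b) \<notin> ?R"
    using dec[OF ab(2) c1]
  proof (elim disjE conjE)
    assume "(c,d) \<in> ?R" then show ?thesis using c0 by simp
  next
    assume h: "(c,a) \<in> ?R" "(b,d) \<in> ?R"
    have "(a,c) \<in> ?S" using mon[OF rtr_sym[OF h(1)]] .
    moreover have "(d,b) \<in> ?S" using mon[OF rtr_sym[OF h(2)]] .
    ultimately have "(a,b) \<in> ?S" using fst(1) by (meson rtrancl_trans r_into_rtrancl)
    moreover have "(a,b) \<notin> ?R"
    proof
      assume "(a,b) \<in> ?R"
      then have "(c,d) \<in> ?R" using h by (meson rtrancl_trans)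
      then show False using c0 by simp
    qed
    ultimately show ?thesis by simp
  next
    assume h: "(c,b) \<in> ?R" "(a,d) \<in> ?R"
    have "(a,d) \<in> ?S" using mon[OF h(2)] .
    moreover have "(c,b) \<in> ?S" using mon[OF h(1)] .
    ultimately have "(a,b) \<in> ?S" using fst(2) by (meson rtrancl_trans r_into_rtrancl)
    moreover have "(a,b) \<notin> ?R"
    proof
      assume "(a,b) \<in> ?R"
      then have "(b,a) \<in> ?R" by (rule rtr_sym)
      then have "(c,d) \<in> ?R" using h by (meson rtrancl_trans)
      then show False using c0 by simp
    qed
    ultimately show ?thesis by simp
  qed
  define \<Q> where "\<Q> = {Q. Q \<subseteq> insert f P \<and> (a,b) \<in> (adj ends Q)\<^sup>*}"
  have fin: "finite \<Q>"
  proof (rule finite_subset)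
    show "\<Q> \<subseteq> Pow (insert f P)" by (auto simp: \<Q>_def)
    show "finite (Pow (insert f P))" using P finE finite_subset by auto
  qed
  have ne: "insert f P \<in> \<Q>" using conn by (simp add: \<Q>_def)
  obtain Q where Q: "Q \<in> \<Q>" "\<And>Q'. Q' \<in> \<Q> \<Longrightarrow> Q' \<subseteq> Q \<Longrightarrow> Q' = Q"
    using finite_has_minimal2[OF fin ne] by blast
  have Qsub: "Q \<subseteq> insert f P" and Qc: "(a,b) \<in> (adj ends Q)\<^sup>*" using Q(1) by (auto simp: \<Q>_def)
  have minQ: "(a,b) \<notin> (adj ends Q')\<^sup>*" if "Q' \<subset> Q" for Q'
  proof
    assume "(a,b) \<in> (adj ends Q')\<^sup>*"
    then have "Q' \<in> \<Q>" using that Qsub by (auto simp: \<Q>_def)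
    then show False using Q(2) that by blast
  qed
  have fQ: "f \<in> Q"
  proof (rule ccontr)
    assume "f \<notin> Q"
    then have "Q \<subseteq> P" using Qsub by blast
    then have "(a,b) \<in> ?R" using Qc by (rule rtr_mono)
    then show False using conn by simp
  qed
  have bcK: "bicon ends (VH \<union> verts ends Q) (EH \<union> Q)"
    by (rule ear[OF bp(3,4) abV ab(1) Qc minQ])
  have QE: "Q \<subseteq> E" using Qsub P f by blast
  have sgK: "is_subgraph V E ends (VH \<union> verts ends Q) (EH \<union> Q)"
    using bp verts_sub[OF QE] QE unfolding is_subgraph_def verts_def by blast
  have "EH \<union> Q = EH" using block_max[OF blk sgK bcK] by blast
  then show ?thesis using fQ by blast
qed

lemma modular:
  assumes blk: "is_block V E ends VH EH" and e: "e \<in> EH" and f: "f \<in> E - EH" and P: "P \<subseteq> E"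
  shows "R (insert e (insert f P)) + R P = R (insert e P) + R (insert f P)"
proof -
  note bp = block_props[OF blk]
  have eE: "e \<in> E" using bp e by blast
  have fE: "f \<in> E" using f by blast
  obtain c d where cd: "c \<noteq> d" "ends f = {c,d}" using ends_ex[OF fE] by blast
  have eP: "insert e P \<subseteq> E" using eE P by blast
  have iff: "(c,d) \<in> (adj ends (insert e P))\<^sup>* \<longleftrightarrow> (c,d) \<in> (adj ends P)\<^sup>*"
  proof
    assume h: "(c,d) \<in> (adj ends (insert e P))\<^sup>*"
    show "(c,d) \<in> (adj ends P)\<^sup>*"
    proof (rule ccontr)
      assume "(c,d) \<notin> (adj ends P)\<^sup>*"
      then have "f \<in> EH" using key[OF blk e fE P cd(2) h] by blast
      then show False using f by blast
    qed
  next
    assume "(c,d) \<in> (adj ends P)\<^sup>*"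
    then show "(c,d) \<in> (adj ends (insert e P))\<^sup>*" by (meson rtr_mono subset_insertI)
  qed
  have g1: "grank ends (insert f (insert e P)) = grank ends (insert e P) + (if (c,d) \<in> (adj ends (insert e P))\<^sup>* then 0 else 1)"
    by (rule grank_insert[OF eP fE cd(2)])
  have g2: "grank ends (insert f P) = grank ends P + (if (c,d) \<in> (adj ends P)\<^sup>* then 0 else 1)"
    by (rule grank_insert[OF P fE cd(2)])
  show ?thesis using g1 g2 iff unfolding R_def by (simp add: insert_commute)
qed

lemma sep:
  assumes blk: "is_block V E ends VH EH" and S: "S \<subseteq> E"
  shows "R S = R (S \<inter> EH) + R (S - EH)"
proof -
  note bp = block_props[OF blk]
  have "R ((S \<inter> EH) \<union> (S - EH)) + R {} = R (S \<inter> EH) + R (S - EH)"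
  proof (rule telescope[where U = E and A = EH and B = "E - EH"])
    show "R (insert e (insert f P)) + R P = R (insert e P) + R (insert f P)"
      if "P \<subseteq> E" "e \<in> EH" "f \<in> E - EH" for P e f
      using modular[OF blk that(2,3,1)] .
  qed (use bp finE finite_subset S in auto)
  moreover have "(S \<inter> EH) \<union> (S - EH) = S" by blast
  ultimately show ?thesis by (simp add: R_def grank_empty)
qed

end


lemma bilin_id: "finite E \<Longrightarrow> bilin E identity_matrix x y = (\<Sum>e\<in>E. x e * y e)"
proof -
  assume fin: "finite E"
  have t: "x e * (if e = f then 1 else 0) * y f = (if f = e then x e * y e else 0)" for e f
    by simp
  show ?thesis unfolding bilin_def identity_matrix_def t
    using fin by (simp add: sum.delta)
qed

context fg begin

lemma NE_unpack:
  assumes "symmetric_NE E ends identity_matrix x"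
  shows "x \<in> base_polytope E ends"
    "\<And>z. z \<in> base_polytope E ends \<Longrightarrow> (\<Sum>e\<in>E. x e * z e) = (\<Sum>e\<in>E. x e * x e)"
proof -
  show "x \<in> base_polytope E ends" using assms by (simp add: symmetric_NE_def)
  fix z assume z: "z \<in> base_polytope E ends"
  have "(\<Sum>e\<in>E. x e * z e) \<le> (\<Sum>e\<in>E. x e * x e)" "(\<Sum>e\<in>E. x e * x e) \<le> (\<Sum>e\<in>E. z e * x e)"
    using assms z by (auto simp: symmetric_NE_def bilin_id[OF finE])
  moreover have "(\<Sum>e\<in>E. z e * x e) = (\<Sum>e\<in>E. x e * z e)" by (simp add: mult.commute)
  ultimately show "(\<Sum>e\<in>E. x e * z e) = (\<Sum>e\<in>E. x e * x e)" by linarith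
qed

lemma other_end: "e \<in> E \<Longrightarrow> v \<in> ends e \<Longrightarrow> \<exists>u. u \<noteq> v \<and> ends e = {u,v}"
proof -
  assume a: "e \<in> E" "v \<in> ends e"
  obtain p q where pq: "p \<noteq> q" "ends e = {p,q}" using ends_ex[OF a(1)] by blast
  show ?thesis
  proof (cases "v = p")
    case True then show ?thesis using pq by (auto simp: insert_commute)
  next
    case False then have "v = q" using a pq by auto
    then show ?thesis using pq by auto
  qed
qed

lemma adj_eq:
  assumes xB: "x \<in> base_polytope E ends"
    and NEq: "\<forall>z\<in>base_polytope E ends. (\<Sum>e\<in>E. x e * z e) = (\<Sum>e\<in>E. x e * x e)"
    and blk: "is_block V E ends VH EH" and e: "e \<in> EH" and f: "f \<in> EH"
    and ve: "v \<in> ends e" and vf: "v \<in> ends f"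
  shows "x e = x f"
proof (cases "e = f")
  case True then show ?thesis by simp
next
  case False
  note bp = block_props[OF blk]
  have eE: "e \<in> E" and fE: "f \<in> E" using bp e f by auto
  obtain u where u: "u \<noteq> v" "ends e = {u,v}" using other_end[OF eE ve] by blast
  obtain w where w: "w \<noteq> v" "ends f = {w,v}" using other_end[OF fE vf] by blast
  define P where "P = {g\<in>EH. v \<notin> ends g}"
  have PE: "P \<subseteq> E" using bp by (auto simp: P_def)
  have eP: "e \<notin> P" "f \<notin> P" using ve vf by (auto simp: P_def)
  have uV: "u \<in> VH - {v}" "w \<in> VH - {v}" using bp(3) e f u w by auto
  have uw: "(u,w) \<in> (adj ends P)\<^sup>*" unfolding P_def by (rule robust[OF bp(3,4) uV])
  have A1: "(u,v) \<notin> (adj ends P)\<^sup>*"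
  proof
    assume "(u,v) \<in> (adj ends P)\<^sup>*"
    then have "u = v" unfolding P_def by (rule avoid)
    then show False using u by simp
  qed
  have A2: "(w,v) \<notin> (adj ends P)\<^sup>*"
  proof
    assume "(w,v) \<in> (adj ends P)\<^sup>*"
    then have "w = v" unfolding P_def by (rule avoid)
    then show False using w by simp
  qed
  have A3: "(w,v) \<in> (adj ends (insert e P))\<^sup>*"
  proof -
    have "(w,u) \<in> (adj ends (insert e P))\<^sup>*" using rtr_sym[OF uw] by (meson rtr_mono subset_insertI)
    moreover have "(u,v) \<in> adj ends (insert e P)" using u by (auto simp: adj_def)
    ultimately show ?thesis by (meson rtrancl_into_rtrancl)
  qed
  have A4: "(u,v) \<in> (adj ends (insert f P))\<^sup>*"
  proof -
    have "(u,w) \<in> (adj ends (insert f P))\<^sup>*" using uw by (meson rtr_mono subset_insertI)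
    moreover have "(w,v) \<in> adj ends (insert f P)" using w by (auto simp: adj_def)
    ultimately show ?thesis by (meson rtrancl_into_rtrancl)
  qed
  have ePE: "insert e P \<subseteq> E" "insert f P \<subseteq> E" using PE eE fE by auto
  have G1: "R (insert e P) = R P + 1" using grank_insert[OF PE eE u(2)] A1 by (simp add: R_def)
  have G2: "R (insert f P) = R P + 1" using grank_insert[OF PE fE w(2)] A2 by (simp add: R_def)
  have G3: "R (insert f (insert e P)) = R (insert e P)"
    using grank_insert[OF ePE(1) fE w(2)] A3 by (simp add: R_def)
  have G4: "R (insert e (insert f P)) = R (insert f P)"
    using grank_insert[OF ePE(2) eE u(2)] A4 by (simp add: R_def)
  have finP: "finite P" using PE finE finite_subset by blast
  obtain Lp where Lp: "distinct Lp" "set Lp = P" using finite_distinct_list[OF finP] by blast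
  have finr: "finite (E - P - {e,f})" using finE by simp
  obtain Lr where Lr: "distinct Lr" "set Lr = E - P - {e,f}" using finite_distinct_list[OF finr] by blast
  define L1 where "L1 = Lp @ e # f # Lr"
  define L2 where "L2 = Lp @ f # e # Lr"
  have L1: "distinct L1" "set L1 = E" using Lp Lr eP False PE eE fE by (auto simp: L1_def)
  have L2: "distinct L2" "set L2 = E" using Lp Lr eP False PE eE fE by (auto simp: L2_def)
  define g1 where "g1 = gr R {} L1"
  define g2 where "g2 = gr R {} L2"
  have g1B: "g1 \<in> base_polytope E ends" unfolding g1_def by (rule gr_in_base[OF L1])
  have g2B: "g2 \<in> base_polytope E ends" unfolding g2_def by (rule gr_in_base[OF L2])
  have eLp: "e \<notin> set Lp" "f \<notin> set Lp" using eP Lp by auto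
  have v1e: "g1 e = 1" unfolding g1_def L1_def using gr_app1[OF eLp(1)] Lp G1 by simp
  have v1f: "g1 f = 0" unfolding g1_def L1_def using gr_app1[OF eLp(2)] Lp G3 False by simp
  have v2f: "g2 f = 1" unfolding g2_def L2_def using gr_app1[OF eLp(2)] Lp G2 by simp
  have v2e: "g2 e = 0" unfolding g2_def L2_def using gr_app1[OF eLp(1)] Lp G4 False by simp
  have rest: "g1 y = g2 y" if "y \<in> E - {e,f}" for y
  proof (cases "y \<in> set Lp")
    case True
    then show ?thesis unfolding g1_def g2_def L1_def L2_def by (rule gr_app2)
  next
    case False
    have "g1 y = gr R (insert f (insert e P)) Lr y"
      unfolding g1_def L1_def using gr_app1[OF False] Lp that by simp
    moreover have "g2 y = gr R (insert e (insert f P)) Lr y"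
      unfolding g2_def L2_def using gr_app1[OF False] Lp that by simp
    ultimately show ?thesis by (simp add: insert_commute)
  qed
  have split: "(\<Sum>y\<in>E. h y) = h e + h f + (\<Sum>y\<in>E - {e,f}. h y)" for h :: "'e \<Rightarrow> real"
  proof -
    have "(\<Sum>y\<in>E. h y) = h e + (\<Sum>y\<in>E - {e}. h y)" using sum.remove[OF finE eE] by simp
    moreover have "(\<Sum>y\<in>E - {e}. h y) = h f + (\<Sum>y\<in>E - {e} - {f}. h y)"
      using sum.remove[of "E - {e}" f h] finE fE False by simp
    moreover have "E - {e} - {f} = E - {e,f}" by blast
    ultimately show ?thesis by simp
  qed
  have "(\<Sum>y\<in>E. x y * g1 y) = (\<Sum>y\<in>E. x y * g2 y)" using NEq g1B g2B by simp
  moreover have "(\<Sum>y\<in>E - {e,f}. x y * g1 y) = (\<Sum>y\<in>E - {e,f}. x y * g2 y)"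
    using rest by (intro sum.cong) auto
  ultimately have "x e * g1 e + x f * g1 f = x e * g2 e + x f * g2 f"
    using split[of "\<lambda>y. x y * g1 y"] split[of "\<lambda>y. x y * g2 y"] by simp
  then show ?thesis using v1e v1f v2e v2f by simp
qed

lemma block_const:
  assumes xB: "x \<in> base_polytope E ends"
    and NEq: "\<forall>z\<in>base_polytope E ends. (\<Sum>e\<in>E. x e * z e) = (\<Sum>e\<in>E. x e * x e)"
    and blk: "is_block V E ends VH EH" and e: "e \<in> EH" and f: "f \<in> EH"
  shows "x f = x e"
proof -
  note bp = block_props[OF blk]
  note ae = adj_eq[OF xB NEq blk]
  have eE: "e \<in> E" and fE: "f \<in> E" using bp e f by auto
  obtain a a' where a: "ends e = {a,a'}" using ends_ex[OF eE] by blast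
  obtain c c' where c: "ends f = {c,c'}" using ends_ex[OF fE] by blast
  have aV: "a \<in> VH" "c \<in> VH" using bp(3) e f a c by auto
  have ac: "(a,c) \<in> (adj ends EH)\<^sup>*" using bp(4) aV unfolding bicon_def connected_graph_def by blast
  have claim: "\<forall>g\<in>EH. w \<in> ends g \<longrightarrow> x g = x e" if "(a,w) \<in> (adj ends EH)\<^sup>*" for w
    using that
  proof (induction rule: rtrancl_induct)
    case base
    show ?case
    proof (intro ballI impI)
      fix g assume g: "g \<in> EH" "a \<in> ends g"
      have "x e = x g" by (rule ae[OF e g(1)]) (use a g in auto)
      then show "x g = x e" by simp
    qed
  next
    case (step w w')
    obtain h where h: "h \<in> EH" "ends h = {w,w'}" using step(2) by (auto simp: adj_def)
    have "x h = x e" using step(3) h by auto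
    moreover have "x g = x h" if "g \<in> EH" "w' \<in> ends g" for g
    proof -
      have "x h = x g" by (rule ae[OF h(1) that(1)]) (use h that in auto)
      then show ?thesis by simp
    qed
    ultimately show ?case by auto
  qed
  show ?thesis using claim[OF ac] f c by auto
qed

lemma forward:
  assumes NE: "symmetric_NE E ends identity_matrix x" and blk: "is_block V E ends VH EH"
  shows "uniformly_dense ends EH"
proof (cases "EH = {}")
  case True
  then show ?thesis by (simp add: uniformly_dense_def grank_empty)
next
  case False
  note xB = NE_unpack(1)[OF NE]
  have NEq: "\<forall>z\<in>base_polytope E ends. (\<Sum>e\<in>E. x e * z e) = (\<Sum>e\<in>E. x e * x e)"
    using NE_unpack(2)[OF NE] by blast
  note bp = block_props[OF blk]
  obtain e0 where e0: "e0 \<in> EH" using False by blast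
  define c0 where "c0 = x e0"
  have const: "x f = c0" if "f \<in> EH" for f
    unfolding c0_def by (rule block_const[OF xB NEq blk e0 that])
  have xle: "sum x S \<le> R S" if "S \<subseteq> E" for S using xB that by (simp add: base_polytope_def R_def)
  have xE: "sum x E = R E" using xB by (simp add: base_polytope_def R_def)
  have finEH: "finite EH" using bp finE finite_subset by blast
  have "R E = R (E \<inter> EH) + R (E - EH)" by (rule sep[OF blk]) simp
  moreover have "E \<inter> EH = EH" using bp by blast
  moreover have "sum x E = sum x EH + sum x (E - EH)"
    using sum.subset_diff[OF bp(2) finE, of x] by simp
  ultimately have sEH: "sum x EH = R EH"
    using xle[of EH] xle[of "E - EH"] xE bp by auto
  have sumc: "sum x F = real (card F) * c0" if "F \<subseteq> EH" for F
  proof -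
    have "sum x F = sum (\<lambda>_. c0) F" using const that by (intro sum.cong) auto
    then show ?thesis by simp
  qed
  have REH: "R EH \<ge> 1" using grank_pos[OF bp(2) False] by (simp add: R_def)
  have cEH: "real (card EH) > 0" using finEH False by (simp add: card_gt_0_iff)
  have lam: "c0 * real (card EH) = R EH" using sumc[of EH] sEH by simp
  show ?thesis unfolding uniformly_dense_def
  proof (intro allI impI)
    fix F assume F: "F \<subseteq> EH" "0 < grank ends F"
    have RF: "R F > 0" using F by (simp add: R_def)
    have "real (card F) * c0 \<le> R F" using sumc[OF F(1)] xle[of F] F bp by auto
    then have "real (card F) * c0 * real (card EH) \<le> R F * real (card EH)"
      using cEH by (simp add: mult_right_mono)
    then have "real (card F) * R EH \<le> R F * real (card EH)" using lam by (simp add: mult.assoc)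
    then show "real (card F) / real (grank ends F) \<le> real (card EH) / real (grank ends EH)"
      using RF REH by (simp add: R_def divide_simps mult.commute)
  qed
qed

end


context fg begin

definition Bs :: "'e set set" where
  "Bs = {EH. (\<exists>VH. is_block V E ends VH EH) \<and> EH \<noteq> {}}"

lemma Bs_sub: "B \<in> Bs \<Longrightarrow> B \<subseteq> E"
  unfolding Bs_def using block_props(2) by blast

lemma Bs_fin: "finite Bs"
proof (rule finite_subset)
  show "Bs \<subseteq> Pow E" using Bs_sub by blast
  show "finite (Pow E)" using finE by simp
qed

lemma Bs_disj: "B1 \<in> Bs \<Longrightarrow> B2 \<in> Bs \<Longrightarrow> B1 \<noteq> B2 \<Longrightarrow> B1 \<inter> B2 = {}"
  unfolding Bs_def using block_unique by blast

lemma Bs_cover: "e \<in> E \<Longrightarrow> \<exists>B\<in>Bs. e \<in> B"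
  unfolding Bs_def using block_exists by blast

lemma Bs_sep: "B \<in> Bs \<Longrightarrow> S \<subseteq> E \<Longrightarrow> R S = R (S \<inter> B) + R (S - B)"
  unfolding Bs_def using sep by blast

lemma decomp_aux:
  assumes "finite \<F>" "\<F> \<subseteq> Bs" "S \<subseteq> E"
  shows "R S = (\<Sum>B\<in>\<F>. R (S \<inter> B)) + R (S - \<Union>\<F>)"
  using assms
proof (induction \<F> rule: finite_induct)
  case empty
  then show ?case by simp
next
  case (insert B \<F>)
  have IH: "R S = (\<Sum>B\<in>\<F>. R (S \<inter> B)) + R (S - \<Union>\<F>)" using insert by simp
  have BB: "B \<in> Bs" using insert by simp
  have "R (S - \<Union>\<F>) = R ((S - \<Union>\<F>) \<inter> B) + R ((S - \<Union>\<F>) - B)"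
    by (rule Bs_sep[OF BB]) (use insert in auto)
  moreover have "(S - \<Union>\<F>) \<inter> B = S \<inter> B"
  proof -
    have "B \<inter> B' = {}" if "B' \<in> \<F>" for B'
      using Bs_disj[OF BB, of B'] insert that by blast
    then show ?thesis by blast
  qed
  moreover have "(S - \<Union>\<F>) - B = S - \<Union>(insert B \<F>)" by blast
  ultimately show ?case using IH insert by simp
qed

lemma decomp: "S \<subseteq> E \<Longrightarrow> R S = (\<Sum>B\<in>Bs. R (S \<inter> B))"
proof -
  assume S: "S \<subseteq> E"
  have e: "S - \<Union>Bs = {}" using S Bs_cover by blast
  have "R S = (\<Sum>B\<in>Bs. R (S \<inter> B)) + R (S - \<Union>Bs)" using decomp_aux[OF Bs_fin _ S] by simp
  then show ?thesis unfolding e by (simp add: R_def grank_empty)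
qed

lemma sum_part: "S \<subseteq> E \<Longrightarrow> sum h S = (\<Sum>B\<in>Bs. sum h (S \<inter> B))"
proof -
  assume S: "S \<subseteq> E"
  have "S = (\<Union>B\<in>Bs. S \<inter> B)" using S Bs_cover by blast
  moreover have "sum h (\<Union>B\<in>Bs. S \<inter> B) = (\<Sum>B\<in>Bs. sum h (S \<inter> B))"
  proof (rule sum.UNION_disjoint)
    show "finite Bs" by (rule Bs_fin)
    show "\<forall>i\<in>Bs. finite (S \<inter> i)" using S finE finite_subset by blast
    show "\<forall>i\<in>Bs. \<forall>j\<in>Bs. i \<noteq> j \<longrightarrow> S \<inter> i \<inter> (S \<inter> j) = {}" using Bs_disj by blast
  qed
  ultimately show ?thesis by simp
qed

lemma R_nonneg: "R S \<ge> 0" by (simp add: R_def)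

lemma tight:
  assumes z: "z \<in> base_polytope E ends" and B: "B \<in> Bs"
  shows "sum z B = R B"
proof -
  have zle: "sum z S \<le> R S" if "S \<subseteq> E" for S using z that by (simp add: base_polytope_def R_def)
  have zE: "sum z E = R E" using z by (simp add: base_polytope_def R_def)
  have e1: "sum z E = (\<Sum>B\<in>Bs. sum z B)"
    using sum_part[of E z] Bs_sub by (simp add: Int_absorb1)
  have e2: "R E = (\<Sum>B\<in>Bs. R B)"
    using decomp[of E] Bs_sub by (simp add: Int_absorb1)
  have "(\<Sum>B\<in>Bs. R B - sum z B) = 0" using e1 e2 zE by (simp add: sum_subtractf)
  moreover have nn: "\<And>B. B \<in> Bs \<Longrightarrow> R B - sum z B \<ge> 0" using zle Bs_sub by auto
  moreover have "(\<Sum>B\<in>Bs. R B - sum z B) = 0 \<longleftrightarrow> (\<forall>B\<in>Bs. R B - sum z B = 0)"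
    by (rule sum_nonneg_eq_0_iff[OF Bs_fin nn])
  ultimately have "\<forall>B\<in>Bs. R B - sum z B = 0" by blast
  then show ?thesis using B by simp
qed

definition blk :: "'e \<Rightarrow> 'e set" where "blk e = (THE B. B \<in> Bs \<and> e \<in> B)"

lemma blk_eq: "B \<in> Bs \<Longrightarrow> e \<in> B \<Longrightarrow> blk e = B"
  unfolding blk_def using Bs_disj by (intro the_equality) blast+

definition xs :: "'e \<Rightarrow> real" where
  "xs e = (if e \<in> E then R (blk e) / real (card (blk e)) else 0)"

lemma xs_on: "B \<in> Bs \<Longrightarrow> e \<in> B \<Longrightarrow> xs e = R B / real (card B)"
  using blk_eq Bs_sub unfolding xs_def by auto

lemma backward:
  assumes UD: "\<forall>VH EH. is_block V E ends VH EH \<longrightarrow> uniformly_dense ends EH"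
  shows "symmetric_NE E ends identity_matrix xs"
proof -
  have UDB: "uniformly_dense ends B" if "B \<in> Bs" for B using UD that unfolding Bs_def by blast
  have cB: "real (card B) > 0" if "B \<in> Bs" for B
  proof -
    have "finite B" using Bs_sub[OF that] finE finite_subset by blast
    moreover have "B \<noteq> {}" using that unfolding Bs_def by blast
    ultimately show ?thesis by (simp add: card_gt_0_iff)
  qed
  have RB: "R B \<ge> 1" if "B \<in> Bs" for B
    using grank_pos[OF Bs_sub[OF that]] that unfolding Bs_def by (simp add: R_def)
  have xsS: "sum xs (S \<inter> B) = real (card (S \<inter> B)) * (R B / real (card B))" if "B \<in> Bs" for S B
  proof -
    have "sum xs (S \<inter> B) = sum (\<lambda>_. R B / real (card B)) (S \<inter> B)"
      using xs_on[OF that] by (intro sum.cong) auto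
    then show ?thesis by simp
  qed
  have blockle: "real (card (S \<inter> B)) * (R B / real (card B)) \<le> R (S \<inter> B)" if "B \<in> Bs" for S B
  proof (cases "S \<inter> B = {}")
    case True then show ?thesis by (simp add: R_nonneg)
  next
    case False
    have SBE: "S \<inter> B \<subseteq> E" using Bs_sub[OF that] by blast
    have pos: "grank ends (S \<inter> B) \<ge> 1" using grank_pos[OF SBE False] .
    then have "real (card (S \<inter> B)) / R (S \<inter> B) \<le> real (card B) / R B"
      using UDB[OF that] unfolding uniformly_dense_def R_def by auto
    moreover have "R (S \<inter> B) > 0" using pos by (simp add: R_def)
    ultimately show ?thesis using cB[OF that] RB[OF that] by (simp add: field_simps)
  qed
  have xB: "xs \<in> base_polytope E ends"
    unfolding base_polytope_def
  proof (intro CollectI conjI allI impI ballI)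
    fix e assume "e \<notin> E" then show "xs e = 0" by (simp add: xs_def)
  next
    fix e assume "e \<in> E" then show "xs e \<ge> 0" by (simp add: xs_def R_def)
  next
    fix S assume S: "S \<subseteq> E"
    have "sum xs S = (\<Sum>B\<in>Bs. sum xs (S \<inter> B))" by (rule sum_part[OF S])
    also have "\<dots> \<le> (\<Sum>B\<in>Bs. R (S \<inter> B))"
      using xsS blockle by (intro sum_mono) auto
    also have "\<dots> = R S" using decomp[OF S] by simp
    finally show "sum xs S \<le> real (grank ends S)" by (simp add: R_def)
  next
    have "sum xs E = (\<Sum>B\<in>Bs. sum xs (E \<inter> B))" by (rule sum_part) simp
    also have "\<dots> = (\<Sum>B\<in>Bs. R (E \<inter> B))"
    proof (intro sum.cong refl)
      fix B assume B: "B \<in> Bs"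
      have "E \<inter> B = B" using Bs_sub[OF B] by blast
      then show "sum xs (E \<inter> B) = R (E \<inter> B)" using xsS[OF B, of E] cB[OF B] by simp
    qed
    also have "\<dots> = R E" using decomp[of E] by simp
    finally show "sum xs E = real (grank ends E)" by (simp add: R_def)
  qed
  define K where "K = (\<Sum>B\<in>Bs. (R B / real (card B)) * R B)"
  have val: "(\<Sum>e\<in>E. xs e * z e) = K" if z: "z \<in> base_polytope E ends" for z
  proof -
    have "(\<Sum>e\<in>E. xs e * z e) = (\<Sum>B\<in>Bs. \<Sum>e\<in>E \<inter> B. xs e * z e)" by (rule sum_part) simp
    also have "\<dots> = (\<Sum>B\<in>Bs. (R B / real (card B)) * sum z B)"
    proof (intro sum.cong refl)
      fix B assume B: "B \<in> Bs"
      have "E \<inter> B = B" using Bs_sub[OF B] by blast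
      then have "(\<Sum>e\<in>E \<inter> B. xs e * z e) = (\<Sum>e\<in>B. (R B / real (card B)) * z e)"
        using xs_on[OF B] by (intro sum.cong) auto
      also have "\<dots> = (R B / real (card B)) * sum z B" by (simp add: sum_distrib_left)
      finally show "(\<Sum>e\<in>E \<inter> B. xs e * z e) = (R B / real (card B)) * sum z B" .
    qed
    also have "\<dots> = K" unfolding K_def using tight[OF z] by simp
    finally show ?thesis .
  qed
  show ?thesis unfolding symmetric_NE_def
  proof (intro conjI ballI)
    show "xs \<in> base_polytope E ends" by (rule xB)
  next
    fix z assume z: "z \<in> base_polytope E ends"
    have a: "bilin E identity_matrix xs z = K" using val[OF z] bilin_id[OF finE] by simp
    have b: "bilin E identity_matrix xs xs = K" using val[OF xB] bilin_id[OF finE] by simp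
    have c: "bilin E identity_matrix z xs = K" using val[OF z] bilin_id[OF finE]
      by (simp add: mult.commute)
    show "bilin E identity_matrix xs z \<le> bilin E identity_matrix xs xs" using a b by simp
    show "bilin E identity_matrix xs xs \<le> bilin E identity_matrix z xs" using b c by simp
  qed
qed

end

theorem corollary10:
  fixes V :: "'v set" and E :: "'e set" and ends :: "'e \<Rightarrow> 'v set"
  assumes "finite_graph V E ends"
  shows "(\<exists>x. symmetric_NE E ends identity_matrix x) \<longleftrightarrow>
         (\<forall>VH EH. is_block V E ends VH EH \<longrightarrow> uniformly_dense ends EH)"
proof -
  interpret fg V E ends using assms by unfold_locales
  show ?thesis
  proof
    assume "\<exists>x. symmetric_NE E ends identity_matrix x"
    then obtain x where "symmetric_NE E ends identity_matrix x" by blast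
    then show "\<forall>VH EH. is_block V E ends VH EH \<longrightarrow> uniformly_dense ends EH"
      using forward by blast
  next
    assume "\<forall>VH EH. is_block V E ends VH EH \<longrightarrow> uniformly_dense ends EH"
    then show "\<exists>x. symmetric_NE E ends identity_matrix x" using backward by blast
  qed
qed


end
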